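(* Let $\bm\mu=(\mu_1,\dots,\mu_r)$ be finite positive Borel measures on the unit circle with infinite supports, fix the square-root branch as in the context, let $\bm n\in\mathbb N^r$ be $\phi$-normal for $\bm\mu$, $\tau\in\partial\mathbb D$, and let $X\not\equiv0$ be a $\tau$-invariant paraorthogonal function for $\bm n$. Suppose that for every $\varphi\in[0,2\pi)$, $\bm n$ is $\phi$-normal with respect to the system $\widehat{\bm\mu}$ given by $d\widehat\mu_j(e^{i\theta})=4\sin^2\frac{\theta-\varphi}{2}\,d\mu_j(e^{i\theta})$ $(=-e^{i\varphi}z^{-1}(z-e^{i\varphi})^2d\mu_j(z))$, $j=1,\dots,r$. Then every zero of the polynomial $z^{(|\bm n|+1)/2}X(z)$ on $\partial\mathbb D$ is simple.
   Context: $\partial\mathbb D=\{|z|=1\}$. Fix $t_0\in\mathbb R$ and let $z^{k/2}=|z|^{k/2}\exp(ik\arg_{[t_0,t_0+2\pi)}(z)/2)$, $k\in\mathbb Z$. $|\bm n|=\sum_j n_j$; $\operatorname{span}\{z^p\}_{p=a}^b$ ($b-a\in\mathbb Z$) is the span of $z^a,\dots,z^b$. For a system $\bm\nu$ of measures on $\partial\mathbb D$, $\bm n$ is $\phi$-normal w.r.t. $\bm\nu$ if there is a unique $\phi\in\operatorname{span}\{z^p\}_{p=-|\bm n|/2}^{|\bm n|/2}$ with coefficient of $z^{|\bm n|/2}$ equal to $1$ such that $\int\phi(z)z^{-p}\,d\nu_j(z)=0$ for $p=-n_j/2,\dots,n_j/2-1$, $j=1,\dots,r$. A $\tau$-invariant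 paraorthogonal function for $\bm n$ is any $X\in\operatorname{span}\{z^p\}_{p=-(|\bm n|+1)/2}^{(|\bm n|+1)/2}$ with $X(z)=\tau\overline{X(1/\bar z)}$ and $\int X(z)z^{-p}\,d\mu_j(z)=0$ for $p=-(n_j-1)/2,\dots,(n_j-1)/2$, $j=1,\dots,r$. $z^{(|\bm n|+1)/2}X(z)$ is a polynomial; zeros of $X$ mean zeros of this polynomial. *)

theory Defs
  imports "HOL-Analysis.Analysis" "HOL-Computational_Algebra.Polynomial"
begin

text \<open>Argument of z taken in the window [t0, t0 + 2 pi).\<close>
definition argt :: "real \<Rightarrow> complex \<Rightarrow> real" where
  "argt t0 z = Arg z - 2 * pi * of_int \<lfloor>(Arg z - t0) / (2 * pi)\<rfloor>"

definition halfpow :: "real \<Rightarrow> int \<Rightarrow> complex \<Rightarrow> complex" where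
  "halfpow t0 k z = complex_of_real (cmod z powr (real_of_int k / 2))
      * exp (\<i> * complex_of_real (real_of_int k * argt t0 z / 2))"

text \<open>Element of span{z^p}, p = -N/2, ..., N/2, with coefficient c m at z^((2m-N)/2).\<close>
definition hsum :: "real \<Rightarrow> nat \<Rightarrow> (nat \<Rightarrow> complex) \<Rightarrow> complex \<Rightarrow> complex" where
  "hsum t0 N c = (\<lambda>z. \<Sum>m\<le>N. c m * halfpow t0 (2 * int m - int N) z)"

definition msupport :: "complex measure \<Rightarrow> complex set" where
  "msupport M = {z. \<forall>e>0. emeasure M (ball z e) > 0}"

definition phi_normal :: "real \<Rightarrow> (nat \<Rightarrow> complex measure) \<Rightarrow> nat \<Rightarrow> (nat \<Rightarrow> nat) \<Rightarrow> bool" where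
  "phi_normal t0 \<nu> r n \<longleftrightarrow>
     (let N = (\<Sum>j<r. n j) in
      \<exists>!\<phi>. (\<exists>c. c N = 1 \<and> \<phi> = hsum t0 N c) \<and>
           (\<forall>j<r. \<forall>l<n j. integral\<^sup>L (\<nu> j) (\<lambda>z. \<phi> z * halfpow t0 (int (n j) - 2 * int l) z) = 0))"

definition paraorth :: "real \<Rightarrow> (nat \<Rightarrow> complex measure) \<Rightarrow> nat \<Rightarrow> (nat \<Rightarrow> nat) \<Rightarrow> complex
    \<Rightarrow> (complex \<Rightarrow> complex) \<Rightarrow> bool" where
  "paraorth t0 \<mu> r n \<tau> X \<longleftrightarrow>
     (let N = (\<Sum>j<r. n j) in
      (\<exists>c. X = hsum t0 (N + 1) c) \<and>
      (\<forall>z. z \<noteq> 0 \<longrightarrow> X z = \<tau> * cnj (X (1 / cnj z))) \<and>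
      (\<forall>j<r. \<forall>l<n j. integral\<^sup>L (\<mu> j) (\<lambda>z. X z * halfpow t0 (int (n j) - 1 - 2 * int l) z) = 0))"

end

theory Submission
  imports Defs
begin


lemma Arg_meas[measurable]: "Arg \<in> borel_measurable borel"
proof -
  have A: "{x\<in>space borel. (x::complex) \<in> - \<real>\<^sub>\<le>\<^sub>0} \<in> sets borel"
  proof -
    have o: "open (- \<real>\<^sub>\<le>\<^sub>0 :: complex set)" by (simp add: open_Compl)
    have eq: "{x\<in>space borel. (x::complex) \<in> - \<real>\<^sub>\<le>\<^sub>0} = - \<real>\<^sub>\<le>\<^sub>0" by auto
    show ?thesis unfolding eq by (rule borel_open[OF o])
  qed
  have "(\<lambda>x. if x \<in> - \<real>\<^sub>\<le>\<^sub>0 then Arg x else Arg x) \<in> borel_measurable borel"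
  proof (subst measurable_If_restrict_space_iff[OF A], intro conjI)
    have eq: "{x. x \<in> - \<real>\<^sub>\<le>\<^sub>0} = (- \<real>\<^sub>\<le>\<^sub>0 :: complex set)" by blast
    show "Arg \<in> borel_measurable (restrict_space borel {x. x \<in> - \<real>\<^sub>\<le>\<^sub>0})"
      unfolding eq by (rule borel_measurable_continuous_on_restrict[OF continuous_on_Arg])
    have h: "(\<lambda>z::complex. if z \<in> {0} then 0 else pi) \<in> borel_measurable borel"
        by (rule measurable_If_set) auto
    have m: "(\<lambda>z. if z = 0 then 0 else pi) \<in> borel_measurable (restrict_space borel {x::complex. \<not> x \<in> - \<real>\<^sub>\<le>\<^sub>0})"
      using measurable_restrict_space1[OF h, of "{x::complex. \<not> x \<in> - \<real>\<^sub>\<le>\<^sub>0}"] by simp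
    have e: "(if w = 0 then 0 else pi) = Arg w" if "w \<in> space (restrict_space borel {x::complex. \<not> x \<in> - \<real>\<^sub>\<le>\<^sub>0})" for w
    proof -
      have "w \<in> \<real>\<^sub>\<le>\<^sub>0" using that by (simp add: space_restrict_space)
      then have "Re w \<le> 0" "Im w = 0" by (auto simp: complex_nonpos_Reals_iff)
      then show ?thesis
      proof (cases "w = 0")
        case True then show ?thesis by (simp add: Arg_zero)
      next
        case False
        then have "Re w < 0" using \<open>Re w \<le> 0\<close> \<open>Im w = 0\<close> complex_eq_iff by force
        then show ?thesis using False \<open>Im w = 0\<close> Arg_eq_pi[of w] by simp
      qed
    qed
    show "Arg \<in> borel_measurable (restrict_space borel {x::complex. \<not> x \<in> - \<real>\<^sub>\<le>\<^sub>0})"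
      using m measurable_cong[of _ "\<lambda>z. if z = 0 then 0 else pi" Arg] e by blast
  qed
  then show ?thesis by simp
qed

lemma halfpow_meas[measurable]: "halfpow t0 k \<in> borel_measurable borel"
  unfolding halfpow_def argt_def by measurable

lemma hsum_meas[measurable]: "hsum t0 N c \<in> borel_measurable borel"
  unfolding hsum_def by measurable



lemma halfpow_mult: "halfpow t0 a z * halfpow t0 b z = halfpow t0 (a + b) z"
proof (cases "z = 0")
  case True then show ?thesis by (simp add: halfpow_def)
next
  case False
  have e1: "real_of_int (a+b)/2 = real_of_int a/2 + real_of_int b/2" by simp
  have p: "cmod z powr (real_of_int (a+b) / 2) = cmod z powr (real_of_int a / 2) * cmod z powr (real_of_int b / 2)"
    unfolding e1 by (rule powr_add)
  define t where "t = argt t0 z"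
  have e2: "real_of_int (a+b) * t / 2 = real_of_int a * t / 2 + real_of_int b * t / 2"
    by (simp add: field_simps)
  have q: "exp (\<i> * complex_of_real (real_of_int (a+b) * t / 2)) = exp (\<i> * complex_of_real (real_of_int a * t / 2)) * exp (\<i> * complex_of_real (real_of_int b * t / 2))"
    unfolding e2 of_real_add distrib_left by (rule exp_add)
  show ?thesis unfolding halfpow_def t_def[symmetric] p q of_real_mult by (simp only: ac_simps)
qed

lemma halfpow_0: "z \<noteq> 0 \<Longrightarrow> halfpow t0 0 z = 1"
  by (simp add: halfpow_def)

lemma halfpow_nz: "z \<noteq> 0 \<Longrightarrow> halfpow t0 k z \<noteq> 0"
  by (simp add: halfpow_def)

lemma halfpow_norm: "cmod z = 1 \<Longrightarrow> cmod (halfpow t0 k z) = 1"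
  by (simp add: halfpow_def norm_mult)

lemma halfpow_2: assumes "z \<noteq> 0" shows "halfpow t0 2 z = z"
proof -
  define k where "k = \<lfloor>(Arg z - t0) / (2 * pi)\<rfloor>"
  have "exp (\<i> * complex_of_real (argt t0 z)) = exp (\<i> * complex_of_real (Arg z)) * exp (- (2 * of_int k * pi) * \<i>)"
    by (simp add: argt_def k_def exp_add[symmetric] algebra_simps exp_diff)
  also have "exp (- (2 * of_int k * pi) * \<i>) = 1"
    using exp_integer_2pi[of "- of_int k"] by simp
  finally have "exp (\<i> * complex_of_real (argt t0 z)) = exp (\<i> * complex_of_real (Arg z))" by simp
  moreover have "complex_of_real (cmod z) * exp (\<i> * complex_of_real (Arg z)) = z"
    by (metis cis_conv_exp rcis_cmod_Arg rcis_def mult.commute)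
  ultimately show ?thesis by (simp add: halfpow_def)
qed

lemma halfpow_2m: assumes "z \<noteq> 0" shows "halfpow t0 (2 * int m) z = z ^ m"
proof (induction m)
  case 0 then show ?case using halfpow_0[OF assms] by simp
next
  case (Suc m)
  have "halfpow t0 (2 * int (Suc m)) z = halfpow t0 (2 * int m) z * halfpow t0 2 z"
    by (simp add: halfpow_mult algebra_simps)
  then show ?case using Suc halfpow_2[OF assms] by simp
qed

lemma halfpow_m2: assumes "z \<noteq> 0" shows "halfpow t0 (-2) z = 1 / z"
proof -
  have "halfpow t0 (-2) z * z = 1"
    using halfpow_mult[of t0 "-2" z 2] halfpow_2[OF assms] halfpow_0[OF assms] by simp
  then show ?thesis using assms by (simp add: field_simps)
qed

lemma hsum_poly: assumes "z \<noteq> 0"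
  shows "hsum t0 N c z = halfpow t0 (- int N) z * (\<Sum>m\<le>N. c m * z ^ m)"
proof -
  have "halfpow t0 (2 * int m - int N) z = halfpow t0 (- int N) z * z ^ m" for m
    using halfpow_mult[of t0 "- int N" z "2 * int m"] halfpow_2m[OF assms, of t0 m] by simp
  then show ?thesis unfolding hsum_def by (simp add: sum_distrib_left ac_simps)
qed

lemma hsum_add: "hsum t0 N (\<lambda>m. a m + b m) z = hsum t0 N a z + hsum t0 N b z"
  unfolding hsum_def by (simp add: sum.distrib distrib_right)

lemma hsum_bound: assumes "cmod z = 1" shows "cmod (hsum t0 N c z) \<le> (\<Sum>m\<le>N. cmod (c m))"
proof -
  have "cmod (hsum t0 N c z) \<le> (\<Sum>m\<le>N. cmod (c m * halfpow t0 (2 * int m - int N) z))"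
    unfolding hsum_def by (rule norm_sum)
  also have "\<dots> = (\<Sum>m\<le>N. cmod (c m))"
    using halfpow_norm[OF assms] by (simp add: norm_mult)
  finally show ?thesis .
qed

lemma dens_eq:
  assumes z: "cmod z = 1" and w: "w = cis \<phi>"
  shows "complex_of_real (4 * (sin ((Arg z - \<phi>) / 2))\<^sup>2) = - (z - w)\<^sup>2 / (z * w)"
proof -
  define a where "a = Arg z"
  have z0: "z \<noteq> 0" using z by auto
  have za: "z = cis a" using cis_Arg[OF z0] z unfolding a_def by (simp add: sgn_div_norm)
  have w0: "w \<noteq> 0" using w by simp
  have "- (z - w)\<^sup>2 / (z * w) = 2 - z / w - w / z"
    using z0 w0 by (simp add: field_simps power2_eq_square)
  also have "\<dots> = 2 - cis (a - \<phi>) - cis (\<phi> - a)" by (simp add: za w cis_divide)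
  also have "\<dots> = complex_of_real (2 - 2 * cos (a - \<phi>))"
    using cos_minus[of "a - \<phi>"] sin_minus[of "a - \<phi>"] by (simp add: complex_eq_iff cis.sel)
  also have "2 - 2 * cos (a - \<phi>) = 4 * (sin ((a - \<phi>) / 2))\<^sup>2"
  proof -
    have "2 * ((a - \<phi>) / 2) = a - \<phi>" by simp
    then show ?thesis using cos_double_sin[of "(a - \<phi>) / 2"] by (simp only:) simp
  qed
  finally show ?thesis by (simp add: a_def)
qed

lemma meas_M: assumes "sets M = sets borel" "F \<in> borel_measurable borel" shows "F \<in> borel_measurable M"
  using assms measurable_cong_sets[of M borel borel borel] by simp

lemma AE_circ:
  assumes "sets M = sets borel" "emeasure M (UNIV - sphere 0 1) = 0"
  shows "AE z in M. cmod z = 1"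
proof (rule AE_I')
  have "closed (sphere (0::complex) 1)" by simp
  then have "UNIV - sphere (0::complex) 1 \<in> sets borel" by (simp add: borel_open open_Diff)
  then show "UNIV - sphere 0 1 \<in> null_sets M" using assms by (simp add: null_sets_def)
  show "{x \<in> space M. \<not> cmod x = 1} \<subseteq> UNIV - sphere 0 1" by auto
qed

lemma int_lemma:
  fixes F :: "complex \<Rightarrow> complex" and g :: "complex \<Rightarrow> real"
  assumes M: "sets M = sets borel" "finite_measure M" "emeasure M (UNIV - sphere 0 1) = 0"
    and F: "F \<in> borel_measurable borel" "\<And>z. cmod z = 1 \<Longrightarrow> cmod (F z) \<le> B"
    and g: "g \<in> borel_measurable borel" "\<And>z. 0 \<le> g z" "\<And>z. g z \<le> 4"
  shows "integrable (density M g) F"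
proof -
  have Fm: "F \<in> borel_measurable M" and gm: "g \<in> borel_measurable M" using M(1) F(1) g(1) meas_M by auto
  interpret finite_measure M by (rule M(2))
  have "integrable M (\<lambda>x. g x *\<^sub>R F x)"
  proof (rule integrable_const_bound[where B="4 * B"])
    show "AE x in M. norm (g x *\<^sub>R F x) \<le> 4 * B"
      using AE_circ[OF M(1) M(3)]
    proof eventually_elim
      case (elim x)
      have "norm (g x *\<^sub>R F x) = g x * cmod (F x)" using g(2)[of x] by simp
      also have "\<dots> \<le> 4 * B" using g(2,3)[of x] F(2)[OF elim] norm_ge_zero[of "F x"]
        by (meson mult_mono order_trans)
      finally show ?case .
    qed
    show "(\<lambda>x. g x *\<^sub>R F x) \<in> borel_measurable M" using Fm gm by measurable
  qed
  then show ?thesis using integrable_density[OF Fm gm] g(2) by simp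
qed

lemma poly_sum_le:
  fixes Q :: "complex poly"
  assumes "degree Q \<le> N" shows "poly Q z = (\<Sum>m\<le>N. coeff Q m * z ^ m)"
proof -
  have "poly Q z = (\<Sum>m\<le>degree Q. coeff Q m * z ^ m)" by (rule poly_altdef)
  also have "\<dots> = (\<Sum>m\<le>N. coeff Q m * z ^ m)"
    by (rule sum.mono_neutral_left) (use assms in \<open>auto simp: coeff_eq_0\<close>)
  finally show ?thesis .
qed

theorem theorem4p2:
  fixes t0 :: real and \<mu> :: "nat \<Rightarrow> complex measure" and r :: nat and n :: "nat \<Rightarrow> nat"
    and \<tau> :: complex and X :: "complex \<Rightarrow> complex"
  assumes borel: "\<And>j. j < r \<Longrightarrow> sets (\<mu> j) = sets borel"
    and fin: "\<And>j. j < r \<Longrightarrow> finite_measure (\<mu> j)"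
    and circ: "\<And>j. j < r \<Longrightarrow> emeasure (\<mu> j) (UNIV - sphere 0 1) = 0"
    and inf_supp: "\<And>j. j < r \<Longrightarrow> infinite (msupport (\<mu> j))"
    and normal: "phi_normal t0 \<mu> r n"
    and tau: "cmod \<tau> = 1"
    and para: "paraorth t0 \<mu> r n \<tau> X"
    and nonzero: "X \<noteq> (\<lambda>_. 0)"
    and normal_mod: "\<And>\<phi>. 0 \<le> \<phi> \<Longrightarrow> \<phi> < 2 * pi \<Longrightarrow>
        phi_normal t0 (\<lambda>j. density (\<mu> j) (\<lambda>z. ennreal (4 * (sin ((Arg z - \<phi>) / 2))\<^sup>2))) r n"
  shows "\<forall>c. X = hsum t0 ((\<Sum>j<r. n j) + 1) c \<longrightarrow>
           (\<forall>z. cmod z = 1 \<and> poly (\<Sum>m\<le>(\<Sum>j<r. n j) + 1. monom (c m) m) z = 0 \<longrightarrow>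
                order z (\<Sum>m\<le>(\<Sum>j<r. n j) + 1. monom (c m) m) = 1)"
proof (intro allI impI)
  define N where "N = (\<Sum>j<r. n j)"
  fix c z0
  assume Xc: "X = hsum t0 ((\<Sum>j<r. n j) + 1) c"
    and z0': "cmod z0 = 1 \<and> poly (\<Sum>m\<le>(\<Sum>j<r. n j) + 1. monom (c m) m) z0 = 0"
  define P where "P = (\<Sum>m\<le>N + 1. monom (c m) m)"
  have Xc: "X = hsum t0 (N + 1) c" using Xc by (simp add: N_def)
  have z0: "cmod z0 = 1" "poly P z0 = 0" using z0' by (simp_all add: N_def P_def)
  have z0nz: "z0 \<noteq> 0" using z0 by auto
  have paraI: "\<forall>j<r. \<forall>l<n j. integral\<^sup>L (\<mu> j) (\<lambda>z. X z * halfpow t0 (int (n j) - 1 - 2 * int l) z) = 0"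
    using para unfolding paraorth_def Let_def by blast
  have coeffP: "coeff P m = (if m \<le> N + 1 then c m else 0)" for m
    unfolding P_def by (simp add: coeff_sum coeff_monom)
  have polyP: "poly P z = (\<Sum>m\<le>N + 1. c m * z ^ m)" for z
    unfolding P_def by (simp add: poly_sum poly_monom)
  have Xz: "X z = halfpow t0 (- int (N + 1)) z * poly P z" if "z \<noteq> 0" for z
    unfolding Xc polyP using hsum_poly[OF that] by simp
  have Pnz: "P \<noteq> 0"
  proof
    assume "P = 0"
    then have "c m = 0" if "m \<le> N + 1" for m using coeffP[of m] that by simp
    then have "X = (\<lambda>_. 0)" unfolding Xc hsum_def by (simp add: fun_eq_iff)
    then show False using nonzero by simp
  qed
  have degP: "degree P \<le> N + 1" by (rule degree_le) (simp add: coeffP)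
  have ord1: "order z0 P \<noteq> 0" using order_root[of P z0] z0(2) Pnz by simp
  show "order z0 (\<Sum>m\<le>(\<Sum>j<r. n j) + 1. monom (c m) m) = 1"
  proof (rule ccontr)
    assume "order z0 (\<Sum>m\<le>(\<Sum>j<r. n j) + 1. monom (c m) m) \<noteq> 1"
    then have "2 \<le> order z0 P" using ord1 by (simp add: P_def N_def)
    then have "[:-z0, 1:] ^ 2 dvd P" using order_divides by blast
    then obtain Q where PQ: "P = [:-z0, 1:] ^ 2 * Q" by (elim dvdE)
    have Qnz: "Q \<noteq> 0" using Pnz PQ by auto
    have "degree P = 2 + degree Q" unfolding PQ using Qnz
      by (simp add: degree_mult_eq degree_power_eq)
    then have degQ: "degree Q < N" using degP by simp
    then have cQN: "coeff Q N = 0" by (simp add: coeff_eq_0)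
    define \<psi> where "\<psi> = hsum t0 N (coeff Q)"
    have psiz: "\<psi> z = halfpow t0 (- int N) z * poly Q z" if "z \<noteq> 0" for z
      unfolding \<psi>_def hsum_poly[OF that] using poly_sum_le[of Q N z] degQ by simp
    have Xpsi: "X z = halfpow t0 (-1) z * (z - z0)\<^sup>2 * \<psi> z" if "z \<noteq> 0" for z
    proof -
      have "poly P z = (z - z0)\<^sup>2 * poly Q z" unfolding PQ by simp
      moreover have "halfpow t0 (- int (N + 1)) z = halfpow t0 (-1) z * halfpow t0 (- int N) z"
        using halfpow_mult[of t0 "-1" z "- int N"] by simp
      ultimately show ?thesis using Xz[OF that] psiz[OF that] by (simp add: ac_simps)
    qed
    define \<phi> where "\<phi> = (if 0 \<le> Arg z0 then Arg z0 else Arg z0 + 2 * pi)"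
    have phi_range: "0 \<le> \<phi>" "\<phi> < 2 * pi"
      using Arg_bounded[of z0] unfolding \<phi>_def by auto
    have cis_phi: "z0 = cis \<phi>"
    proof -
      have "cis (Arg z0) = z0" using cis_Arg[OF z0nz] z0(1) by (simp add: sgn_div_norm)
      moreover have "cis (Arg z0 + 2 * pi) = cis (Arg z0)" by (simp add: cis_mult[symmetric])
      ultimately show ?thesis unfolding \<phi>_def by simp
    qed
    define g where "g = (\<lambda>z. 4 * (sin ((Arg z - \<phi>) / 2))\<^sup>2)"
    define \<nu> where "\<nu> = (\<lambda>j. density (\<mu> j) (\<lambda>z. ennreal (g z)))"
    have gm: "g \<in> borel_measurable borel" unfolding g_def by measurable
    have g0: "0 \<le> g z" for z unfolding g_def by simp
    have g4: "g z \<le> 4" for z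
    proof -
      have "(sin ((Arg z - \<phi>) / 2))\<^sup>2 \<le> 1" by (simp add: abs_sin_le_one abs_square_le_1)
      then show ?thesis unfolding g_def by simp
    qed
    have gz: "complex_of_real (g z) = - (z - z0)\<^sup>2 / (z * z0)" if "cmod z = 1" for z
      unfolding g_def using dens_eq[OF that cis_phi] .
    have normal2: "phi_normal t0 \<nu> r n" unfolding \<nu>_def g_def using normal_mod[OF phi_range] .
    then obtain \<phi>h where phih: "(\<exists>c. c N = 1 \<and> \<phi>h = hsum t0 N c) \<and>
           (\<forall>j<r. \<forall>l<n j. integral\<^sup>L (\<nu> j) (\<lambda>z. \<phi>h z * halfpow t0 (int (n j) - 2 * int l) z) = 0)"
      and uniq: "\<And>\<phi>'. (\<exists>c. c N = 1 \<and> \<phi>' = hsum t0 N c) \<and>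
           (\<forall>j<r. \<forall>l<n j. integral\<^sup>L (\<nu> j) (\<lambda>z. \<phi>' z * halfpow t0 (int (n j) - 2 * int l) z) = 0) \<Longrightarrow> \<phi>' = \<phi>h"
    proof -
      have "\<exists>!\<phi>'. (\<exists>c. c N = 1 \<and> \<phi>' = hsum t0 N c) \<and>
           (\<forall>j<r. \<forall>l<n j. integral\<^sup>L (\<nu> j) (\<lambda>z. \<phi>' z * halfpow t0 (int (n j) - 2 * int l) z) = 0)"
        using normal2 unfolding phi_normal_def Let_def N_def by simp
      then show ?thesis using that by (elim ex1E) blast
    qed
    obtain ch where ch: "ch N = 1" "\<phi>h = hsum t0 N ch" using phih by blast
    have psi_orth: "integral\<^sup>L (\<nu> j) (\<lambda>z. \<psi> z * halfpow t0 (int (n j) - 2 * int l) z) = 0"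
      if j: "j < r" and l: "l < n j" for j l
    proof -
      define h where "h = halfpow t0 (int (n j) - 2 * int l)"
      define h' where "h' = halfpow t0 (int (n j) - 1 - 2 * int l)"
      have hm: "(\<lambda>z. \<psi> z * h z) \<in> borel_measurable (\<mu> j)"
        by (rule meas_M[OF borel[OF j]]) (unfold \<psi>_def h_def, measurable)
      have gmj: "g \<in> borel_measurable (\<mu> j)" using meas_M[OF borel[OF j] gm] .
      have "integral\<^sup>L (\<nu> j) (\<lambda>z. \<psi> z * h z) = integral\<^sup>L (\<mu> j) (\<lambda>z. g z *\<^sub>R (\<psi> z * h z))"
        unfolding \<nu>_def by (rule integral_density[OF hm gmj]) (simp add: g0)
      also have "\<dots> = integral\<^sup>L (\<mu> j) (\<lambda>z. - (1 / z0) * (X z * h' z))"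
      proof (rule integral_cong_AE)
        show "(\<lambda>z. g z *\<^sub>R (\<psi> z * h z)) \<in> borel_measurable (\<mu> j)" using hm gmj by measurable
        show "(\<lambda>z. - (1 / z0) * (X z * h' z)) \<in> borel_measurable (\<mu> j)"
          by (rule meas_M[OF borel[OF j]]) (unfold Xc h'_def, measurable)
        show "AE z in \<mu> j. g z *\<^sub>R (\<psi> z * h z) = - (1 / z0) * (X z * h' z)"
          using AE_circ[OF borel[OF j] circ[OF j]]
        proof eventually_elim
          case (elim z)
          then have znz: "z \<noteq> 0" by auto
          have hh: "h' z = h z * halfpow t0 (-1) z"
            unfolding h_def h'_def halfpow_mult by (simp add: algebra_simps)
          have "g z *\<^sub>R (\<psi> z * h z) = complex_of_real (g z) * (\<psi> z * h z)"
            by (simp add: scaleR_conv_of_real)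
          also have "\<dots> = - (z - z0)\<^sup>2 / (z * z0) * (\<psi> z * h z)" using gz[OF elim] by simp
          also have "\<dots> = - (1 / z0) * (X z * h' z)"
          proof -
            have "halfpow t0 (-1) z * halfpow t0 (-1) z = 1 / z"
              using halfpow_mult[of t0 "-1" z "-1"] halfpow_m2[OF znz] by simp
            then show ?thesis unfolding Xpsi[OF znz] hh using znz z0nz
              by (simp add: field_simps power2_eq_square)
          qed
          finally show ?case .
        qed
      qed
      also have "\<dots> = 0" using paraI j l unfolding h'_def by simp
      finally show ?thesis unfolding h_def .
    qed
    have hsum_int: "integrable (\<nu> j) (\<lambda>z. hsum t0 N cc z * halfpow t0 k z)" if j: "j < r" for j cc k
      unfolding \<nu>_def
    proof (rule int_lemma[OF borel[OF j] fin[OF j] circ[OF j] _ _ gm g0 g4])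
      show "(\<lambda>z. hsum t0 N cc z * halfpow t0 k z) \<in> borel_measurable borel" by measurable
      show "cmod (hsum t0 N cc z * halfpow t0 k z) \<le> (\<Sum>m\<le>N. cmod (cc m))" if "cmod z = 1" for z
        using hsum_bound[OF that] halfpow_norm[OF that] by (simp add: norm_mult)
    qed
    define \<phi>2 where "\<phi>2 = hsum t0 N (\<lambda>m. ch m + coeff Q m)"
    have phi2: "\<phi>2 z = \<phi>h z + \<psi> z" for z
      unfolding \<phi>2_def \<psi>_def ch(2) by (rule hsum_add)
    have "\<phi>2 = \<phi>h"
    proof (rule uniq, intro conjI)
      show "\<exists>c. c N = 1 \<and> \<phi>2 = hsum t0 N c" unfolding \<phi>2_def by (rule exI[of _ "\<lambda>m. ch m + coeff Q m"]) (simp add: ch(1) cQN)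
      show "\<forall>j<r. \<forall>l<n j. integral\<^sup>L (\<nu> j) (\<lambda>z. \<phi>2 z * halfpow t0 (int (n j) - 2 * int l) z) = 0"
      proof (intro allI impI)
        fix j l assume j: "j < r" and l: "l < n j"
        have "integral\<^sup>L (\<nu> j) (\<lambda>z. \<phi>2 z * halfpow t0 (int (n j) - 2 * int l) z)
          = integral\<^sup>L (\<nu> j) (\<lambda>z. \<phi>h z * halfpow t0 (int (n j) - 2 * int l) z + \<psi> z * halfpow t0 (int (n j) - 2 * int l) z)"
          unfolding phi2 by (simp add: distrib_right)
        also have "\<dots> = integral\<^sup>L (\<nu> j) (\<lambda>z. \<phi>h z * halfpow t0 (int (n j) - 2 * int l) z) + integral\<^sup>L (\<nu> j) (\<lambda>z. \<psi> z * halfpow t0 (int (n j) - 2 * int l) z)"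
          by (rule Bochner_Integration.integral_add) (use hsum_int[OF j] in \<open>simp_all add: ch(2) \<psi>_def\<close>)
        also have "\<dots> = 0" using phih psi_orth[OF j l] j l by simp
        finally show "integral\<^sup>L (\<nu> j) (\<lambda>z. \<phi>2 z * halfpow t0 (int (n j) - 2 * int l) z) = 0" .
      qed
    qed
    then have "\<psi> z = 0" for z using phi2[of z] by simp
    then have "poly Q z = 0" if "z \<noteq> 0" for z using psiz[OF that] halfpow_nz[OF that] by simp
    then have "UNIV - {0} \<subseteq> {z. poly Q z = 0}" by auto
    moreover have "finite {z. poly Q z = 0}" by (rule poly_roots_finite[OF Qnz])
    ultimately have "finite (UNIV - {0::complex})" by (rule finite_subset)
    then show False by (simp add: infinite_UNIV_char_0)
  qed
qed

end
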